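(* Let $m=m_n$ and $\delta=\delta_n>0$ satisfy $m^2/n\to0$ and $\delta^2 m/n\to0$ as $n\to\infty$, and fix $\varepsilon>0$. Define $\varphi_n:[1/4,3/4]\to\mathbb{R}$ by \[ \varphi_n(x) = h(x) + \frac{m(m+1)}{4n}\big(g(x) - \log 4\big) + \frac{m\delta^2}{n} f(x) + \frac{1}{2n} g(x), \] where $f(x) = ((1-2x)^2+\varepsilon)^{1/2}$, $g(x) = -\log(x(1-x))$ and $h(x) = -x\log x - (1-x)\log(1-x)$. Then for all sufficiently large $n$, $\varphi_n$ is strictly concave on $[1/4,3/4]$ and has a unique maximum at $x=1/2$. Moreover, $\varphi_n''$ converges uniformly to $h''$ on $[1/4,3/4]$ as $n\to\infty$. *)

theory Defs
  imports "HOL-Analysis.Analysis"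
begin

definition strictly_concave_on :: "real set \<Rightarrow> (real \<Rightarrow> real) \<Rightarrow> bool" where
  "strictly_concave_on S F \<longleftrightarrow>
     (\<forall>x\<in>S. \<forall>y\<in>S. \<forall>t::real. x \<noteq> y \<and> 0 < t \<and> t < 1 \<longrightarrow>
        F ((1 - t) * x + t * y) > (1 - t) * F x + t * F y)"

definition f_fun :: "real \<Rightarrow> real \<Rightarrow> real" where
  "f_fun \<epsilon> x = sqrt ((1 - 2 * x)^2 + \<epsilon>)"

definition g_fun :: "real \<Rightarrow> real" where
  "g_fun x = - ln (x * (1 - x))"

definition h_fun :: "real \<Rightarrow> real" where
  "h_fun x = - x * ln x - (1 - x) * ln (1 - x)"

definition phi :: "(nat \<Rightarrow> nat) \<Rightarrow> (nat \<Rightarrow> real) \<Rightarrow> real \<Rightarrow> nat \<Rightarrow> real \<Rightarrow> real" where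
  "phi m \<delta> \<epsilon> n x =
     h_fun x
     + real (m n * (m n + 1)) / (4 * real n) * (g_fun x - ln 4)
     + real (m n) * (\<delta> n)^2 / real n * f_fun \<epsilon> x
     + 1 / (2 * real n) * g_fun x"

end

theory Submission imports Defs begin

definition "h1 x = ln (1-x) - ln (x::real)"
definition "h2 x = -1/(1-x) - 1/(x::real)"
definition "g1 x = 1/(1-x) - 1/(x::real)"
definition "g2 x = 1/(1-x)^2 + 1/(x::real)^2"
definition "f1 e x = -2*(1-2*x) / sqrt ((1-2*x)^2 + e)"
definition "f2 e x = 4*e / sqrt ((1-2*x)^2 + e) ^ 3"

lemma h_d: "0 < x \<Longrightarrow> x < 1 \<Longrightarrow> (h_fun has_real_derivative h1 x) (at x)"
  unfolding h_fun_def h1_def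
  by (rule derivative_eq_intros refl | simp add: field_simps)+

lemma h1_d: "0 < x \<Longrightarrow> x < 1 \<Longrightarrow> (h1 has_real_derivative h2 x) (at x)"
  unfolding h1_def[abs_def] h2_def
  by (rule derivative_eq_intros refl | simp add: field_simps)+

lemma g_d: "0 < x \<Longrightarrow> x < 1 \<Longrightarrow> (g_fun has_real_derivative g1 x) (at x)"
  unfolding g_fun_def[abs_def] g1_def
  by (rule derivative_eq_intros refl | simp add: field_simps)+

lemma g1_d: "0 < x \<Longrightarrow> x < 1 \<Longrightarrow> (g1 has_real_derivative g2 x) (at x)"
  unfolding g1_def[abs_def] g2_def
  by (rule derivative_eq_intros refl | simp)+ (simp add: field_simps power2_eq_square)

lemma f_d: "0 < e \<Longrightarrow> (f_fun e has_real_derivative f1 e x) (at x)"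
proof -
  assume e: "0 < e"
  let ?u = "(1 - 2*x)^2 + e"
  have pos: "0 < ?u" using e by (simp add: add_nonneg_pos)
  have u: "((\<lambda>x. (1-2*x)^2+e) has_real_derivative (-4*(1-2*x))) (at x)"
    by (rule derivative_eq_intros refl | simp)+
  have sq: "(sqrt has_real_derivative inverse (sqrt ?u) / 2) (at ?u)"
    by (rule DERIV_real_sqrt[OF pos])
  have "((\<lambda>x. sqrt ((1-2*x)^2+e)) has_real_derivative inverse (sqrt ?u) / 2 * (-4*(1-2*x))) (at x)"
    by (rule DERIV_chain2[OF sq u])
  moreover have "inverse (sqrt ?u) / 2 * (-4*(1-2*x)) = f1 e x"
    using pos unfolding f1_def by (simp add: field_simps add_pos_nonneg)
  ultimately show ?thesis unfolding f_fun_def[abs_def] by simp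
qed

lemma f1_d: "0 < e \<Longrightarrow> (f1 e has_real_derivative f2 e x) (at x)"
proof -
  assume e: "0 < e"
  let ?u = "(1 - 2*x)^2 + e"
  have pos: "0 < ?u" using e by (simp add: add_nonneg_pos)
  have spos: "sqrt ?u > 0" using pos by simp
  have s2: "sqrt ?u ^ 2 = ?u" using pos by simp
  have n: "((\<lambda>x. -2*(1-2*x)) has_real_derivative 4) (at x)"
    by (rule derivative_eq_intros refl | simp)+
  have "((\<lambda>x. -2*(1-2*x) / f_fun e x) has_real_derivative
     (4 * f_fun e x - (-2*(1-2*x)) * f1 e x) / (f_fun e x * f_fun e x)) (at x)"
    by (rule DERIV_divide[OF n f_d[OF e]]) (use spos in \<open>simp add: f_fun_def\<close>)
  moreover have "(4 * f_fun e x - (-2*(1-2*x)) * f1 e x) / (f_fun e x * f_fun e x) = f2 e x"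
    unfolding f1_def f2_def f_fun_def using spos s2
    by (simp add: field_simps power2_eq_square power3_eq_cube)
  moreover have "(\<lambda>x. -2*(1-2*x) / f_fun e x) = f1 e"
    by (auto simp: f1_def f_fun_def)
  ultimately show ?thesis by simp
qed

lemma comb_d:
  assumes "(F has_real_derivative F1) (at x)" "(G has_real_derivative G1) (at x)"
    "(H has_real_derivative H1) (at x)"
  shows "((\<lambda>x. F x + a * (G x - c) + b * H x + d * G x) has_real_derivative
          F1 + a * G1 + b * H1 + d * G1) (at x)"
proof -
  have "((\<lambda>x. F x + a * (G x - c) + b * H x + d * G x) has_real_derivative
          F1 + a * (G1 - 0) + b * H1 + d * G1) (at x)"
    by (intro DERIV_add DERIV_cmult DERIV_diff assms DERIV_const)
  then show ?thesis by simp
qed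

lemma dd_lemma:
  assumes "\<And>y. y \<in> {0<..<1} \<Longrightarrow> (F has_real_derivative F1 y) (at y)"
    "\<And>y. y \<in> {0<..<1} \<Longrightarrow> (F1 has_real_derivative F2 y) (at y)"
    "x \<in> {0<..<(1::real)}"
  shows "deriv (deriv F) x = F2 x"
proof -
  have "(deriv F has_real_derivative F2 x) (at x)"
    by (rule has_field_derivative_transform_within_open[OF assms(2)[OF assms(3)] _ assms(3)])
       (auto intro!: DERIV_imp_deriv[symmetric] assms(1))
  then show ?thesis by (rule DERIV_imp_deriv)
qed

lemma strict_conc:
  assumes d1: "\<And>x. x \<in> {1/4..3/4} \<Longrightarrow> (F has_real_derivative F1 x) (at x)"
    and d2: "\<And>x. x \<in> {1/4..3/4} \<Longrightarrow> (F1 has_real_derivative F2 x) (at x)"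
    and neg: "\<And>x. x \<in> {1/4..3/4::real} \<Longrightarrow> F2 x \<le> -1"
  shows "strictly_concave_on {1/4..3/4} F"
proof -
  have cc: "concave_on {1/4..3/4} (\<lambda>x. F x + x^2/2)"
  proof (rule f''_le0_imp_concave)
    show "((\<lambda>x. F x + x^2/2) has_real_derivative F1 x + x) (at x)" if "x \<in> {1/4..3/4}" for x
      by (rule derivative_eq_intros d1 that refl | simp)+
    show "((\<lambda>x. F1 x + x) has_real_derivative F2 x + 1) (at x)" if "x \<in> {1/4..3/4}" for x
      by (rule derivative_eq_intros d2 that refl | simp)+
    show "F2 x + 1 \<le> 0" if "x \<in> {1/4..3/4}" for x using neg[OF that] by simp
  qed simp
  show ?thesis unfolding strictly_concave_on_def
  proof (intro ballI allI impI)
    fix x y t :: real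
    assume x: "x \<in> {1/4..3/4}" and y: "y \<in> {1/4..3/4}" and h: "x \<noteq> y \<and> 0 < t \<and> t < 1"
    have key: "\<And>a b c p q r::real. a \<le> c + q/2 \<Longrightarrow> p - q = r \<Longrightarrow> 0 < r \<Longrightarrow> a = b + p/2 \<Longrightarrow> b < c"
      by linarith
    have "F ((1 - t) * x + t * y) + ((1 - t) * x + t * y)^2/2 \<ge>
          (1 - t) * (F x + x^2/2) + t * (F y + y^2/2)"
      using concave_onD[OF cc, of t x y] x y h by simp
    moreover have "(1 - t) * x^2 + t * y^2 - ((1 - t) * x + t * y)^2 = t * (1 - t) * (x - y)^2"
      by (simp add: algebra_simps power2_eq_square)
    moreover have "t * (1 - t) * (x - y)^2 > 0" using h by simp
    moreover have "(1-t)*(F x + x^2/2) + t*(F y + y^2/2) = (1-t)*F x + t*F y + ((1-t)*x^2 + t*y^2)/2"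
      by (simp add: field_simps)
    ultimately show "F ((1 - t) * x + t * y) > (1 - t) * F x + t * F y"
      by (rule key)
  qed
qed

lemma phi_sym: "phi m \<delta> \<epsilon> n (1 - x) = phi m \<delta> \<epsilon> n x"
proof -
  have "h_fun (1 - x) = h_fun x" unfolding h_fun_def by (simp add: algebra_simps)
  moreover have "g_fun (1 - x) = g_fun x" unfolding g_fun_def by (simp add: mult.commute)
  moreover have "f_fun \<epsilon> (1 - x) = f_fun \<epsilon> x" unfolding f_fun_def
    by (simp add: power2_eq_square algebra_simps)
  ultimately show ?thesis unfolding phi_def by simp
qed

lemma bounds:
  assumes "x \<in> {1/4..3/4::real}" "0 < e"
  shows "h2 x \<le> -8/3" "0 \<le> g2 x" "g2 x \<le> 32" "0 \<le> f2 e x" "f2 e x \<le> 4 * e / sqrt e ^ 3"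
proof -
  from assms have x: "1/4 \<le> x" "x \<le> 3/4" by auto
  have a: "1/x \<ge> 4/3" "1/(1-x) \<ge> 4/3" using x by (auto simp: field_simps)
  have b: "1/x \<le> 4" "1/(1-x) \<le> 4" using x by (auto simp: field_simps)
  show "h2 x \<le> -8/3" unfolding h2_def using a by simp
  show "0 \<le> g2 x" unfolding g2_def by simp
  have "(1/x)^2 \<le> 4^2" by (rule power_mono[OF b(1)]) (use x in simp)
  moreover have "(1/(1-x))^2 \<le> 4^2" by (rule power_mono[OF b(2)]) (use x in simp)
  ultimately have "1/x^2 \<le> 16" "1/(1-x)^2 \<le> 16" by (simp_all add: power_one_over)
  then show "g2 x \<le> 32" unfolding g2_def by simp
  have s: "sqrt e \<le> sqrt ((1 - 2*x)^2 + e)" by simp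
  have sp: "0 < sqrt e" using assms by simp
  have p1: "sqrt e ^ 3 \<le> sqrt ((1 - 2*x)^2 + e) ^ 3" by (rule power_mono[OF s]) (use assms in simp)
  have p2: "0 < sqrt e ^ 3" using sp by simp
  have p3: "0 < sqrt ((1 - 2*x)^2 + e) ^ 3" using assms by (simp add: add_nonneg_pos)
  show "f2 e x \<le> 4 * e / sqrt e ^ 3" unfolding f2_def
    by (rule divide_left_mono[OF p1]) (use assms p2 p3 in auto)
  show "0 \<le> f2 e x" unfolding f2_def using assms by simp
qed

theorem lemma5p2:
  fixes m :: "nat \<Rightarrow> nat" and \<delta> :: "nat \<Rightarrow> real" and \<epsilon> :: real
  assumes \<delta>_pos: "\<And>n. \<delta> n > 0"
    and m_lim: "(\<lambda>n. real (m n) ^ 2 / real n) \<longlonglongrightarrow> 0"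
    and \<delta>_lim: "(\<lambda>n. (\<delta> n)^2 * real (m n) / real n) \<longlonglongrightarrow> 0"
    and \<epsilon>_pos: "\<epsilon> > 0"
  shows "(\<forall>\<^sub>F n in sequentially.
            strictly_concave_on {1/4..3/4} (phi m \<delta> \<epsilon> n) \<and>
            (\<forall>x\<in>{1/4..3/4::real}. x \<noteq> 1/2 \<longrightarrow> phi m \<delta> \<epsilon> n x < phi m \<delta> \<epsilon> n (1/2)))
       \<and> uniform_limit {1/4..3/4} (\<lambda>n x. deriv (deriv (phi m \<delta> \<epsilon> n)) x)
            (deriv (deriv h_fun)) sequentially"
proof -
  define A where "A n = real (m n * (m n + 1)) / (4 * real n)" for n
  define B where "B n = real (m n) * (\<delta> n)^2 / real n" for n
  define C where "C n = 1 / (2 * real n)" for n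
  define P1 where "P1 n x = h1 x + A n * g1 x + B n * f1 \<epsilon> x + C n * g1 x" for n x
  define P2 where "P2 n x = h2 x + A n * g2 x + B n * f2 \<epsilon> x + C n * g2 x" for n x
  define K where "K = 4 * \<epsilon> / sqrt \<epsilon> ^ 3"
  have Kpos: "K > 0" unfolding K_def using \<epsilon>_pos by simp
  have phi_eq: "phi m \<delta> \<epsilon> n = (\<lambda>x. h_fun x + A n * (g_fun x - ln 4) + B n * f_fun \<epsilon> x + C n * g_fun x)" for n
    unfolding phi_def A_def B_def C_def by auto
  have d1: "(phi m \<delta> \<epsilon> n has_real_derivative P1 n x) (at x)" if "x \<in> {0<..<1}" for n x
    unfolding phi_eq P1_def using that by (intro comb_d h_d g_d f_d \<epsilon>_pos) auto
  have d2: "(P1 n has_real_derivative P2 n x) (at x)" if "x \<in> {0<..<1}" for n x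
  proof -
    have "P1 n = (\<lambda>x. h1 x + A n * (g1 x - 0) + B n * f1 \<epsilon> x + C n * g1 x)"
      unfolding P1_def by auto
    then show ?thesis unfolding P2_def using that by (simp only:) (intro comb_d h1_d g1_d f1_d \<epsilon>_pos, auto)
  qed
  have S01: "x \<in> {0<..<1}" if "x \<in> {1/4..3/4::real}" for x using that by auto
  have ddphi: "deriv (deriv (phi m \<delta> \<epsilon> n)) x = P2 n x" if "x \<in> {1/4..3/4}" for n x
    by (rule dd_lemma[OF d1 d2 S01[OF that]])
  have ddh: "deriv (deriv h_fun) x = h2 x" if "x \<in> {1/4..3/4}" for x
    by (rule dd_lemma[OF h_d h1_d S01[OF that]]) auto
  have bound: "\<forall>\<^sub>F n in sequentially. \<forall>x\<in>{1/4..3/4}. \<bar>P2 n x - h2 x\<bar> < e" if e: "e > 0" for e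
  proof -
    have ev1: "\<forall>\<^sub>F n in sequentially. real (m n) ^ 2 / real n < e / 64"
      by (rule order_tendstoD(2)[OF m_lim]) (use e in simp)
    have ev2: "\<forall>\<^sub>F n in sequentially. (\<delta> n)^2 * real (m n) / real n < e / (4 * K)"
      by (rule order_tendstoD(2)[OF \<delta>_lim]) (use e Kpos in simp)
    have ev3: "\<forall>\<^sub>F n in sequentially. inverse (real n) < e / 64"
      by (rule order_tendstoD(2)[OF lim_inverse_n]) (use e in simp)
    have ev4: "\<forall>\<^sub>F n in sequentially. n \<ge> 1" by (rule eventually_ge_at_top)
    show ?thesis
    proof (rule eventually_mono[OF eventually_conj[OF ev1 eventually_conj[OF ev2 eventually_conj[OF ev3 ev4]]]])
      fix n assume H: "real (m n) ^ 2 / real n < e / 64 \<and> (\<delta> n)^2 * real (m n) / real n < e / (4 * K)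
         \<and> inverse (real n) < e / 64 \<and> n \<ge> 1"
      have npos: "real n > 0" using H by simp
      have A0: "A n \<ge> 0" "B n \<ge> 0" "C n \<ge> 0" unfolding A_def B_def C_def by auto
      have mm: "real (m n * (m n + 1)) \<le> 2 * real (m n) ^ 2"
      proof -
        have "m n * (m n + 1) \<le> 2 * m n ^ 2"
          by (cases "m n") (auto simp: power2_eq_square algebra_simps)
        then show ?thesis by (metis of_nat_le_iff of_nat_mult of_nat_numeral of_nat_power)
      qed
      have A1: "32 * A n < e / 4"
      proof -
        have "A n \<le> 2 * real (m n) ^ 2 / (4 * real n)"
          unfolding A_def using npos mm by (intro divide_right_mono) auto
        also have "\<dots> = (real (m n) ^ 2 / real n) / 2" by simp
        finally have "A n \<le> (real (m n) ^ 2 / real n) / 2" .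
        moreover have "\<And>a M::real. a \<le> M/2 \<Longrightarrow> M < e/64 \<Longrightarrow> 32*a < e/4" by linarith
        ultimately show ?thesis using H[THEN conjunct1] by blast
      qed
      have B1: "K * B n < e / 4"
      proof -
        have "B n < e / (4 * K)" unfolding B_def using H by (simp add: mult.commute)
        then show ?thesis using Kpos by (simp add: field_simps)
      qed
      have C1: "32 * C n < e / 4" unfolding C_def using H by (simp add: field_simps)
      show "\<forall>x\<in>{1/4..3/4}. \<bar>P2 n x - h2 x\<bar> < e"
      proof
        fix x :: real assume x: "x \<in> {1/4..3/4}"
        note bd = bounds[OF x \<epsilon>_pos]
        have "P2 n x - h2 x = A n * g2 x + B n * f2 \<epsilon> x + C n * g2 x" unfolding P2_def by simp
        moreover have "A n * g2 x \<le> A n * 32" by (rule mult_left_mono) (use bd A0 in auto)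
        moreover have "B n * f2 \<epsilon> x \<le> B n * K" unfolding K_def by (rule mult_left_mono) (use bd A0 in auto)
        moreover have "C n * g2 x \<le> C n * 32" by (rule mult_left_mono) (use bd A0 in auto)
        moreover have "0 \<le> A n * g2 x + B n * f2 \<epsilon> x + C n * g2 x" using bd A0 by simp
        ultimately show "\<bar>P2 n x - h2 x\<bar> < e" using A1 B1 C1 by (simp add: mult.commute)
      qed
    qed
  qed
  have part1: "\<forall>\<^sub>F n in sequentially.
            strictly_concave_on {1/4..3/4} (phi m \<delta> \<epsilon> n) \<and>
            (\<forall>x\<in>{1/4..3/4::real}. x \<noteq> 1/2 \<longrightarrow> phi m \<delta> \<epsilon> n x < phi m \<delta> \<epsilon> n (1/2))"
  proof (rule eventually_mono[OF bound[of 1]])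
    fix n assume H: "\<forall>x\<in>{1/4..3/4}. \<bar>P2 n x - h2 x\<bar> < 1"
    have sc: "strictly_concave_on {1/4..3/4} (phi m \<delta> \<epsilon> n)"
    proof (rule strict_conc[OF d1 d2])
      fix x :: real assume x: "x \<in> {1/4..3/4}"
      show "P2 n x \<le> -1" using H x bounds(1)[OF x \<epsilon>_pos] by fastforce
    qed (use S01 in auto)
    moreover have "phi m \<delta> \<epsilon> n x < phi m \<delta> \<epsilon> n (1/2)" if x: "x \<in> {1/4..3/4}" "x \<noteq> 1/2" for x
    proof -
      have c: "phi m \<delta> \<epsilon> n ((1 - 1/2) * x + 1/2 * (1 - x)) > (1 - 1/2) * phi m \<delta> \<epsilon> n x + 1/2 * phi m \<delta> \<epsilon> n (1 - x)"
      proof -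
        have "1 - x \<in> {1/4..3/4}" "x \<noteq> 1 - x" using x by auto
        then show ?thesis
          using sc[unfolded strictly_concave_on_def, rule_format, of x "1 - x" "1/2"] x by simp
      qed
      have eq: "(1 - 1/2) * x + 1/2 * (1 - x) = (1/2::real)" by (simp add: field_simps)
      have "phi m \<delta> \<epsilon> n (1/2) > (1 - 1/2) * phi m \<delta> \<epsilon> n x + 1/2 * phi m \<delta> \<epsilon> n (1 - x)"
        using c unfolding eq .
      then show ?thesis by (simp add: phi_sym)
    qed
    ultimately show "strictly_concave_on {1/4..3/4} (phi m \<delta> \<epsilon> n) \<and>
            (\<forall>x\<in>{1/4..3/4::real}. x \<noteq> 1/2 \<longrightarrow> phi m \<delta> \<epsilon> n x < phi m \<delta> \<epsilon> n (1/2))" by auto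
  qed simp
  have part2: "uniform_limit {1/4..3/4} (\<lambda>n x. deriv (deriv (phi m \<delta> \<epsilon> n)) x)
            (deriv (deriv h_fun)) sequentially"
  proof (rule uniform_limitI)
    fix e :: real assume "e > 0"
    show "\<forall>\<^sub>F n in sequentially. \<forall>x\<in>{1/4..3/4}. dist (deriv (deriv (phi m \<delta> \<epsilon> n)) x) (deriv (deriv h_fun) x) < e"
      by (rule eventually_mono[OF bound[OF \<open>e > 0\<close>]]) (simp add: ddphi ddh dist_real_def)
  qed
  show ?thesis using part1 part2 by blast
qed
end
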